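(* For every $m\ge3$ there exists a constant $B_m>0$ such that $$\omega_{\mathbb{CP}^{m-1}}=B_m\int_{\mathbb{CP}^{m-1}}F_p^*\omega_{\mathbb{CP}^{m-2}}\,dp.$$
   Context: $\omega_{\mathbb{CP}^k}$ is the Fubini–Study form and $dp$ the Fubini–Study volume measure on $\mathbb{CP}^{m-1}$. For $p\in\mathbb{CP}^{m-1}$, with $L_p\subset\mathbb{C}^m$ the complex line represented by $p$, $T_p$ the orthogonal projection onto $L_p^\perp$ and $\varphi_p:L_p^\perp\to\mathbb{C}^{m-1}$ coordinates in a complex orthonormal basis of $L_p^\perp$, the map $F_p:\mathbb{CP}^{m-1}\setminus\{p\}\to\mathbb{CP}^{m-2}$ is $F_p([z])=[\varphi_p(T_pz)]$. The integral is taken pointwise (at each point $x$, over $p\neq x$). *)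

theory Defs
  imports "HOL-Analysis.Analysis"
begin

text \<open>Points of CP^(m-1) are represented by nonzero vectors of complex^'m (with CARD('m) = m);
  tangent vectors at [z] are represented by their lifts in complex^'m.\<close>

definition herm :: "complex^'n \<Rightarrow> complex^'n \<Rightarrow> complex" where
  "herm a b = (\<Sum>i\<in>UNIV. a $ i * cnj (b $ i))"

text \<open>Fubini--Study form pulled back to C^n minus 0, i.e. (i/2) ddbar log |y|^2,
  evaluated at the point y on the tangent vectors a, b.\<close>
definition fs_form :: "complex^'n \<Rightarrow> complex^'n \<Rightarrow> complex^'n \<Rightarrow> real" where
  "fs_form y a b =
     - Im (herm a b / complex_of_real (Re (herm y y))
           - herm a y * herm y b / complex_of_real ((Re (herm y y))^2))"

definition proj_perp :: "complex^'n \<Rightarrow> complex^'n \<Rightarrow> complex^'n" where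
  "proj_perp q y = y - (herm y q / herm q q) *s q"

text \<open>Domain of the p-integration at the point x = [z]: representatives q of p in the unit
  ball (q \<noteq> 0), with p \<noteq> x, i.e. T_p z \<noteq> 0.  Lebesgue measure on the unit ball pushes
  forward to a positive multiple of the Fubini--Study volume on CP^(m-1).\<close>
definition avoid_dom :: "complex^'n \<Rightarrow> (complex^'n) set" where
  "avoid_dom z = {q. q \<noteq> 0 \<and> norm q \<le> 1 \<and> proj_perp q z \<noteq> 0}"

end

theory Submission
  imports Defs
begin
lemma herm_add_left: "herm (a + b) c = herm a c + herm b c"
  by (simp add: herm_def algebra_simps sum.distrib)
lemma herm_add_right: "herm a (b + c) = herm a b + herm a c"
  by (simp add: herm_def algebra_simps sum.distrib)
lemma herm_diff_left: "herm (a - b) c = herm a c - herm b c"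
  by (simp add: herm_def algebra_simps sum_subtractf)
lemma herm_diff_right: "herm a (b - c) = herm a b - herm a c"
  by (simp add: herm_def algebra_simps sum_subtractf)
lemma herm_scale_left: "herm (k *s a) c = k * herm a c"
  by (simp add: herm_def algebra_simps sum_distrib_left)
lemma herm_scale_right: "herm a (k *s c) = cnj k * herm a c"
  by (simp add: herm_def algebra_simps sum_distrib_left)
lemma herm_zero_left[simp]: "herm 0 c = 0"
  by (simp add: herm_def)
lemma herm_zero_right[simp]: "herm a 0 = 0"
  by (simp add: herm_def)
lemma herm_cnj: "herm b a = cnj (herm a b)"
  by (simp add: herm_def mult.commute)
lemma herm_self: "herm a a = complex_of_real ((norm a)^2)"
proof -
  have "herm a a = (\<Sum>i\<in>UNIV. complex_of_real ((norm (a$i))^2))"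
    unfolding herm_def by (rule sum.cong, simp, metis complex_norm_square of_real_power)
  also have "\<dots> = complex_of_real (\<Sum>i\<in>UNIV. (norm (a$i))^2)" by simp
  also have "(\<Sum>i\<in>UNIV. (norm (a$i))^2) = (norm a)^2"
    by (simp add: norm_vec_def L2_set_def sum_nonneg)
  finally show ?thesis .
qed
lemma Re_herm_self: "Re (herm a a) = (norm a)^2"
  by (simp add: herm_self)

lemmas herm_simps = herm_add_left herm_add_right herm_diff_left herm_diff_right
  herm_scale_left herm_scale_right

lemma herm_self_zero_iff: "herm a a = 0 \<longleftrightarrow> a = 0"
  by (simp add: herm_self)

lemma fs_form_alt: "fs_form y a b =
   - Im (herm a b / herm y y - herm a y * herm y b / (herm y y)^2)"
  unfolding fs_form_def by (simp add: herm_self)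

lemma scal_shift: fixes n :: complex assumes "n \<noteq> 0"
  shows "(h + c * X + a * Y + a * c * n) / n - (X + a * n) * (Y + c * n) / n^2 = h / n - X * Y / n^2"
  using assms by (simp add: field_simps power2_eq_square) 

lemma fs_shift: "fs_form y (a + \<alpha> *s y) (b + \<beta> *s y) = fs_form y a b"
proof (cases "y = 0")
  case True then show ?thesis by simp
next
  case False
  then have n: "herm y y \<noteq> 0" by (simp add: herm_self_zero_iff)
  have e1: "herm (a + \<alpha> *s y) (b + \<beta> *s y) = herm a b + cnj \<beta> * herm a y + \<alpha> * herm y b + \<alpha> * cnj \<beta> * herm y y"
    by (simp add: herm_simps algebra_simps)
  have e2: "herm (a + \<alpha> *s y) y = herm a y + \<alpha> * herm y y" by (simp add: herm_simps)
  have e3: "herm y (b + \<beta> *s y) = herm y b + cnj \<beta> * herm y y" by (simp add: herm_simps)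
  show ?thesis unfolding fs_form_alt e1 e2 e3 scal_shift[OF n] ..
qed

lemma aux1: "- Im (complex_of_real k * W) = k * (- Im W)" by simp
lemma aux2: "- Im (W / complex_of_real k) = - Im W / k" by (simp add: Im_divide_of_real)

lemma scal_point: fixes n c :: complex assumes "n \<noteq> 0" "c \<noteq> 0"
  shows "H / (c * cnj c * n) - cnj c * X * (c * Y) / (c * cnj c * n)^2
     = (H / n - X * Y / n^2) / (c * cnj c)"
  using assms by (simp add: field_simps power2_eq_square)

lemma fs_scale_point: "fs_form (c *s y) a b = fs_form y a b / (cmod c)^2"
proof (cases "y = 0 \<or> c = 0")
  case True then show ?thesis by (auto simp: fs_form_def)
next
  case False
  then have n: "herm y y \<noteq> 0" "c \<noteq> 0" by (auto simp add: herm_self_zero_iff)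
  have cc: "c * cnj c = complex_of_real ((cmod c)^2)" by (metis complex_norm_square of_real_power)
  have e: "herm (c *s y) (c *s y) = c * cnj c * herm y y" "herm a (c *s y) = cnj c * herm a y"
    "herm (c *s y) b = c * herm y b" by (simp_all add: herm_simps)
  show ?thesis unfolding fs_form_alt e unfolding scal_point[OF n] unfolding cc
    by (rule aux2)
qed

lemma scal_vecs: fixes n c :: complex
  shows "c * cnj c * H / n - c * X * (cnj c * Y) / n^2 = (c * cnj c) * (H / n - X * Y / n^2)"
  by (simp add: field_simps)

lemma fs_scale_vecs: "fs_form y (c *s a) (c *s b) = (cmod c)^2 * fs_form y a b"
proof -
  have cc: "c * cnj c = complex_of_real ((cmod c)^2)" by (metis complex_norm_square of_real_power)
  have e: "herm (c *s a) (c *s b) = c * cnj c * herm a b" "herm (c *s a) y = c * herm a y"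
    "herm y (c *s b) = cnj c * herm y b" by (simp_all add: herm_simps)
  show ?thesis unfolding fs_form_alt e unfolding scal_vecs unfolding cc by (rule aux1)
qed

definition Kf :: "complex^'n \<Rightarrow> complex^'n \<Rightarrow> complex^'n \<Rightarrow> complex" where
  "Kf y a b = herm a b / herm y y - herm a y * herm y b / (herm y y)^2"

lemma fs_Kf: "fs_form y a b = - Im (Kf y a b)"
  by (simp add: fs_form_alt Kf_def)

lemma Kf_add_left: "Kf y (a + a') b = Kf y a b + Kf y a' b"
  by (simp add: Kf_def herm_simps add_divide_distrib diff_divide_distrib algebra_simps)
lemma Kf_add_right: "Kf y a (b + b') = Kf y a b + Kf y a b'"
  by (simp add: Kf_def herm_simps add_divide_distrib diff_divide_distrib algebra_simps)
lemma Kf_diff_left: "Kf y (a - a') b = Kf y a b - Kf y a' b"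
  by (simp add: Kf_def herm_simps add_divide_distrib diff_divide_distrib algebra_simps)
lemma Kf_diff_right: "Kf y a (b - b') = Kf y a b - Kf y a b'"
  by (simp add: Kf_def herm_simps add_divide_distrib diff_divide_distrib algebra_simps)
lemma Kf_scale_left: "Kf y (c *s a) b = c * Kf y a b"
  by (simp add: Kf_def herm_simps algebra_simps)
lemma Kf_scale_right: "Kf y a (c *s b) = cnj c * Kf y a b"
  by (simp add: Kf_def herm_simps algebra_simps)
lemma Kf_cnj: "Kf y b a = cnj (Kf y a b)"
proof -
  have r: "cnj (herm y y) = herm y y" by (simp add: herm_self)
  show ?thesis unfolding Kf_def
    by (simp add: r herm_cnj[of b a] herm_cnj[of b y] herm_cnj[of y a] mult.commute)
qed

lemma Im_Kf_self: "Im (Kf y a a) = 0"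
  using Kf_cnj[of y a a] by (metis Reals_cnj_iff complex_is_Real_iff)

lemma fs_polar: "fs_form y a b =
   (fs_form y (a - \<i> *s b) (\<i> *s (a - \<i> *s b)) - fs_form y (a + \<i> *s b) (\<i> *s (a + \<i> *s b))) / 4"
proof -
  have k: "Kf y b a = cnj (Kf y a b)" by (rule Kf_cnj)
  show ?thesis unfolding fs_Kf
    by (simp add: Kf_add_left Kf_add_right Kf_diff_left Kf_diff_right Kf_scale_left Kf_scale_right k
         Im_Kf_self algebra_simps)
qed

lemma proj_add: "proj_perp q (a + b) = proj_perp q a + proj_perp q b"
  by (simp add: proj_perp_def vec_eq_iff herm_simps algebra_simps add_divide_distrib)
lemma proj_diff: "proj_perp q (a - b) = proj_perp q a - proj_perp q b"
  by (simp add: proj_perp_def vec_eq_iff herm_simps algebra_simps diff_divide_distrib)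
lemma proj_scale: "proj_perp q (c *s a) = c *s proj_perp q a"
  by (simp add: proj_perp_def vec_eq_iff herm_simps algebra_simps)
lemma proj_zero[simp]: "proj_perp q 0 = 0"
  by (simp add: proj_perp_def vec_eq_iff)

lemma herm_proj_q: "q \<noteq> 0 \<Longrightarrow> herm (proj_perp q a) q = 0"
  by (simp add: proj_perp_def herm_simps herm_self_zero_iff)

lemma herm_proj_self: assumes "q \<noteq> 0"
  shows "herm (proj_perp q a) (proj_perp q a) = herm a a - herm a q * herm q a / herm q q"
proof -
  have n: "herm q q \<noteq> 0" using assms by (simp add: herm_self_zero_iff)
  have r: "cnj (herm q q) = herm q q" by (simp add: herm_self)
  show ?thesis unfolding proj_perp_def herm_simps using n
    by (simp add: r herm_cnj[of q a] field_simps power2_eq_square)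
qed

lemma norm_proj_sq: assumes "q \<noteq> 0"
  shows "(norm (proj_perp q a))^2 = (norm a)^2 - (cmod (herm a q))^2 / (norm q)^2"
proof -
  have "complex_of_real ((norm (proj_perp q a))^2) = complex_of_real ((norm a)^2 - (cmod (herm a q))^2 / (norm q)^2)"
  proof -
    have "herm a q * herm q a = complex_of_real ((cmod (herm a q))^2)"
      by (simp add: herm_cnj[of q a]) (metis complex_norm_square of_real_power)
    then show ?thesis unfolding herm_self[symmetric] herm_proj_self[OF assms]
      by (simp add: herm_self)
  qed
  then show ?thesis using of_real_eq_iff by blast
qed

lemma norm_proj_le: "norm (proj_perp q a) \<le> norm a"
proof (cases "q = 0")
  case True then show ?thesis by (simp add: proj_perp_def)
next
  case False
  have "(norm (proj_perp q a))^2 \<le> (norm a)^2" using norm_proj_sq[OF False, of a] by simp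
  then show ?thesis by (simp add: power_mono_iff)
qed

lemma fs_self_i: "fs_form y a (\<i> *s a) = (norm (proj_perp y a))^2 / (norm y)^2"
proof (cases "y = 0")
  case True then show ?thesis by (simp add: fs_form_def proj_perp_def)
next
  case False
  have "fs_form y a (\<i> *s a) = Re (Kf y a a)"
    unfolding fs_Kf Kf_scale_right by simp
  also have "Kf y a a = herm (proj_perp y a) (proj_perp y a) / herm y y"
    unfolding Kf_def herm_proj_self[OF False] using False
    by (simp add: herm_self_zero_iff field_simps power2_eq_square)
  also have "Re \<dots> = (norm (proj_perp y a))^2 / (norm y)^2"
    by (simp add: herm_self Re_divide_of_real del: of_real_power)
  finally show ?thesis .
qed

definition isU :: "(complex^'n \<Rightarrow> complex^'n) \<Rightarrow> bool" where
  "isU U \<longleftrightarrow> (\<forall>x y. herm (U x) (U y) = herm x y) \<and> (\<forall>x y. U (x + y) = U x + U y)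
     \<and> (\<forall>c x. U (c *s x) = c *s U x)"

lemma isU_herm: "isU U \<Longrightarrow> herm (U x) (U y) = herm x y" by (simp add: isU_def)
lemma isU_add: "isU U \<Longrightarrow> U (x + y) = U x + U y" by (simp add: isU_def)
lemma isU_scale: "isU U \<Longrightarrow> U (c *s x) = c *s U x" by (simp add: isU_def)
lemma isU_zero: "isU U \<Longrightarrow> U 0 = 0"
  using isU_scale[of U 0 0] by simp
lemma isU_diff: "isU U \<Longrightarrow> U (x - y) = U x - U y"
  using isU_add[of U "x - y" y] by (simp add: algebra_simps)
lemma isU_norm: assumes "isU U" shows "norm (U x) = norm x"
proof -
  have "complex_of_real ((norm (U x))^2) = complex_of_real ((norm x)^2)"
    using isU_herm[OF assms, of x x] by (simp only: herm_self)
  then have "(norm (U x))^2 = (norm x)^2" using of_real_eq_iff by blast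
  then show ?thesis by (simp add: power2_eq_iff_nonneg)
qed
lemma isU_zero_iff: "isU U \<Longrightarrow> U x = 0 \<longleftrightarrow> x = 0"
  using isU_norm[of U x] by (metis norm_eq_zero)
lemma isU_scaleR: fixes U :: "complex^'n \<Rightarrow> complex^'n" assumes "isU U" shows "U (r *\<^sub>R x) = r *\<^sub>R U x"
proof -
  have "\<And>y::complex^'n. r *\<^sub>R y = complex_of_real r *s y" by (simp only: vec_eq_iff vector_scaleR_component vector_smult_component) (simp add: scaleR_conv_of_real)
  then show ?thesis using assms by (simp add: isU_scale)
qed
lemma isU_linear: "isU U \<Longrightarrow> linear U"
  by (rule linearI) (simp_all add: isU_add isU_scaleR)

lemma isU_proj: "isU U \<Longrightarrow> proj_perp (U q) (U a) = U (proj_perp q a)"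
  by (simp add: proj_perp_def isU_diff isU_scale isU_herm)

lemma isU_fs: "isU U \<Longrightarrow> fs_form (U y) (U a) (U b) = fs_form y a b"
  by (simp add: fs_form_def isU_herm)

definition Phi :: "complex^'n \<Rightarrow> complex^'n \<Rightarrow> complex^'n \<Rightarrow> complex^'n \<Rightarrow> real" where
  "Phi z u v q = fs_form (proj_perp q z) (proj_perp q u) (proj_perp q v)"

lemma isU_Phi: "isU U \<Longrightarrow> Phi (U z) (U u) (U v) (U q) = Phi z u v q"
  by (simp add: Phi_def isU_proj isU_fs)

lemma isU_avoid: "isU U \<Longrightarrow> U q \<in> avoid_dom (U z) \<longleftrightarrow> q \<in> avoid_dom z"
  by (simp add: avoid_dom_def isU_proj isU_zero_iff isU_norm)

lemma Phi_shift: "Phi z (u + \<alpha> *s z) (v + \<beta> *s z) q = Phi z u v q"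
  by (simp add: Phi_def proj_add proj_scale fs_shift)

lemma Phi_scale_z: "Phi (c *s z) u v q = Phi z u v q / (cmod c)^2"
  by (simp add: Phi_def proj_scale fs_scale_point)

lemma Phi_scale_uv: "Phi z (c *s u) (c *s v) q = (cmod c)^2 * Phi z u v q"
  by (simp add: Phi_def proj_scale fs_scale_vecs)

lemma Phi_polar: "Phi z u v q =
   (Phi z (u - \<i> *s v) (\<i> *s (u - \<i> *s v)) q - Phi z (u + \<i> *s v) (\<i> *s (u + \<i> *s v)) q) / 4"
  unfolding Phi_def proj_add proj_diff proj_scale by (rule fs_polar)

lemma Phi_self_i: "Phi z w (\<i> *s w) q
   = (norm (proj_perp (proj_perp q z) (proj_perp q w)))^2 / (norm (proj_perp q z))^2"
  by (simp add: Phi_def proj_scale fs_self_i)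

lemma Phi_self_i_nonneg: "0 \<le> Phi z w (\<i> *s w) q"
  by (simp add: Phi_self_i)

lemma Phi_self_i_le: "Phi z w (\<i> *s w) q \<le> (norm w)^2 / (norm (proj_perp q z))^2"
proof -
  have "norm (proj_perp (proj_perp q z) (proj_perp q w)) \<le> norm w"
    using norm_proj_le order_trans by blast
  then have "(norm (proj_perp (proj_perp q z) (proj_perp q w)))^2 \<le> (norm w)^2"
    by (simp add: power_mono)
  then show ?thesis unfolding Phi_self_i by (simp add: divide_right_mono)
qed

lemma avoid_scale: "c \<noteq> 0 \<Longrightarrow> avoid_dom (c *s z) = avoid_dom z"
  by (auto simp: avoid_dom_def proj_scale vec_eq_iff)

definition crefl :: "complex^'n \<Rightarrow> complex^'n \<Rightarrow> complex^'n" where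
  "crefl w x = x - (2 * herm x w) *s w"

lemma isU_crefl: fixes w :: "complex^'n" assumes "herm w w = 1" shows "isU (crefl w)"
  unfolding isU_def
proof (intro conjI allI)
  fix x y :: "complex^'n"
  have c: "herm w y = cnj (herm y w)" by (rule herm_cnj)
  show "herm (crefl w x) (crefl w y) = herm x y"
    unfolding crefl_def herm_simps assms c by (simp add: algebra_simps)
next
  fix x y :: "complex^'n"
  show "crefl w (x + y) = crefl w x + crefl w y"
    unfolding crefl_def by (simp add: herm_simps vec_eq_iff algebra_simps)
next
  fix c and x :: "complex^'n"
  show "crefl w (c *s x) = c *s crefl w x"
    unfolding crefl_def by (simp add: herm_simps vec_eq_iff algebra_simps)
qed

lemma crefl_invol: assumes "herm w w = 1" shows "crefl w (crefl w x) = x"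
  unfolding crefl_def by (simp add: herm_simps assms vec_eq_iff algebra_simps)

lemma nn_transl_lborel:
  fixes B :: "'a::euclidean_space set" assumes B: "B \<in> sets borel"
  shows "(\<integral>\<^sup>+y. indicator B (c + y) \<partial>lborel) = emeasure lborel B"
proof -
  have "(\<integral>\<^sup>+y. indicator B (c + y) \<partial>lborel) = (\<integral>\<^sup>+y. indicator B y \<partial>(distr lborel borel ((+) c)))"
    using B by (subst nn_integral_distr) auto
  also have "\<dots> = emeasure lborel B" using B by (simp add: lborel_distr_plus)
  finally show ?thesis .
qed

lemma haar_lite:
  fixes M :: "'a::euclidean_space measure"
  assumes sM: "sets M = sets borel" and sf: "sigma_finite_measure M"
    and tr: "\<And>c. distr M borel ((+) c) = M"
    and A: "A \<in> sets borel" and sym: "\<And>x. x \<in> A \<Longrightarrow> -x \<in> A"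
    and eq: "emeasure M A = emeasure lborel A" and pos: "emeasure lborel A \<noteq> 0"
    and fin: "emeasure lborel A \<noteq> \<infinity>"
  shows "M = lborel"
proof (rule measure_eqI)
  show "sets M = sets lborel" using sM by simp
  fix B assume B': "B \<in> sets M"
  then have B[measurable]: "B \<in> sets borel" using sM by simp
  note A[measurable]
  interpret M: sigma_finite_measure M by (rule sf)
  interpret P: pair_sigma_finite M lborel ..
  have mM[measurable_cong]: "sets M = sets borel" by (rule sM)
  have meas: "(\<lambda>(x,y). indicator A x * indicator B (x + y) :: ennreal) \<in> borel_measurable (M \<Otimes>\<^sub>M lborel)"
    by measurable
  have meas2: "(\<lambda>(t,y). indicator A (t - y) * indicator B t :: ennreal) \<in> borel_measurable (M \<Otimes>\<^sub>M lborel)"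
    by measurable
  have "emeasure M A * emeasure lborel B = (\<integral>\<^sup>+x. indicator A x * emeasure lborel B \<partial>M)"
    using A sM by (simp add: nn_integral_multc)
  also have "\<dots> = (\<integral>\<^sup>+x. (\<integral>\<^sup>+y. indicator A x * indicator B (x + y) \<partial>lborel) \<partial>M)"
  proof (intro nn_integral_cong)
    fix x
    have "(\<integral>\<^sup>+y. indicator A x * indicator B (x + y) \<partial>lborel) = indicator A x * (\<integral>\<^sup>+y. indicator B (x + y) \<partial>lborel)"
      by (rule nn_integral_cmult) measurable
    then show "indicator A x * emeasure lborel B = (\<integral>\<^sup>+y. indicator A x * indicator B (x + y) \<partial>lborel)"
      by (simp add: nn_transl_lborel[OF B])
  qed
  also have "\<dots> = (\<integral>\<^sup>+y. (\<integral>\<^sup>+x. indicator A x * indicator B (x + y) \<partial>M) \<partial>lborel)"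
    using P.Fubini'[OF meas] by simp
  also have "\<dots> = (\<integral>\<^sup>+y. (\<integral>\<^sup>+t. indicator A (t - y) * indicator B t \<partial>M) \<partial>lborel)"
  proof -
    have *: "(\<integral>\<^sup>+t. indicator A (t - y) * indicator B t \<partial>M) = (\<integral>\<^sup>+x. indicator A x * indicator B (x + y) \<partial>M)" for y
    proof -
      have "(\<integral>\<^sup>+t. indicator A (t - y) * indicator B t \<partial>M)
          = (\<integral>\<^sup>+t. indicator A (t - y) * indicator B t \<partial>(distr M borel ((+) y)))" by (simp add: tr)
      also have "\<dots> = (\<integral>\<^sup>+x. indicator A (y + x - y) * indicator B (y + x) \<partial>M)"
        by (subst nn_integral_distr) auto
      finally show ?thesis by (simp add: add.commute)
    qed
    show ?thesis by (simp add: *)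
  qed
  also have "\<dots> = (\<integral>\<^sup>+t. (\<integral>\<^sup>+y. indicator A (t - y) * indicator B t \<partial>lborel) \<partial>M)"
    using P.Fubini'[OF meas2] by simp
  also have "\<dots> = (\<integral>\<^sup>+t. indicator B t * emeasure lborel A \<partial>M)"
  proof (intro nn_integral_cong)
    fix t
    have i: "indicator A (t - y) = (indicator A (-t + y) :: ennreal)" for y
      using sym[of "t - y"] sym[of "-t + y"] by (auto simp: indicator_def)
    have "(\<integral>\<^sup>+y. indicator A (t - y) * indicator B t \<partial>lborel) = (\<integral>\<^sup>+y. indicator A (-t + y) \<partial>lborel) * indicator B t"
      unfolding i by (rule nn_integral_multc) measurable
    then show "(\<integral>\<^sup>+y. indicator A (t - y) * indicator B t \<partial>lborel) = indicator B t * emeasure lborel A"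
      using nn_transl_lborel[OF A, of "-t"] by (simp add: mult.commute)
  qed
  also have "\<dots> = emeasure lborel A * emeasure M B"
    using B' by (simp add: nn_integral_multc mult.commute)
  finally have "emeasure lborel A * emeasure lborel B = emeasure lborel A * emeasure M B"
    using eq by simp
  then show "emeasure M B = emeasure lborel B"
    using pos fin by (simp add: ennreal_mult_cancel_left top_unique)
qed

lemma lborel_invol_isometry:
  fixes f :: "'a::euclidean_space \<Rightarrow> 'a"
  assumes lin: "linear f" and nrm: "\<And>x. norm (f x) = norm x" and inv: "\<And>x. f (f x) = x"
  shows "distr lborel borel f = lborel"
proof -
  have cont: "continuous_on UNIV f"
    using lin by (simp add: linear_continuous_on linear_conv_bounded_linear)
  have fm[measurable]: "f \<in> borel_measurable borel"
    using cont by (rule borel_measurable_continuous_onI)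
  have fb: "emeasure lborel (ball (0::'a) r) \<noteq> \<infinity>" for r
    using emeasure_lborel_ball_finite[of 0 r] by (simp add: less_top)
  have pre: "f -` ball 0 r = ball 0 r" for r
    by (auto simp: nrm)
  show ?thesis
  proof (rule haar_lite[where A="ball 0 1"])
    show "sets (distr lborel borel f) = sets borel" by simp
    show "sigma_finite_measure (distr lborel borel f)"
    proof
      show "\<exists>A. countable A \<and> A \<subseteq> sets (distr lborel borel f) \<and> \<Union> A = space (distr lborel borel f)
              \<and> (\<forall>a\<in>A. emeasure (distr lborel borel f) a \<noteq> \<infinity>)"
      proof (intro exI[of _ "range (\<lambda>n::nat. ball (0::'a) (real n))"] conjI)
        show "\<Union> (range (\<lambda>n::nat. ball (0::'a) (real n))) = space (distr lborel borel f)"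
          by (auto simp: reals_Archimedean2)
        show "\<forall>a\<in>range (\<lambda>n::nat. ball (0::'a) (real n)). emeasure (distr lborel borel f) a \<noteq> \<infinity>"
          using fb by (auto simp: emeasure_distr pre)
      qed auto
    qed
    show "distr (distr lborel borel f) borel ((+) c) = distr lborel borel f" for c
    proof -
      have l: "f (x + y) = f x + f y" for x y using lin by (simp add: linear_add)
      have e: "(+) c \<circ> f = f \<circ> (+) (f c)" by (auto simp: l inv)
      have "distr (distr lborel borel f) borel ((+) c) = distr lborel borel ((+) c \<circ> f)"
        by (subst distr_distr) auto
      also have "\<dots> = distr lborel borel (f \<circ> (+) (f c))" by (simp add: e)
      also have "\<dots> = distr (distr lborel borel ((+) (f c))) borel f"
        by (subst distr_distr) auto
      also have "\<dots> = distr lborel borel f" by (simp add: lborel_distr_plus)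
      finally show ?thesis .
    qed
    show "ball 0 1 \<in> sets borel" by simp
    show "- x \<in> ball 0 1" if "x \<in> ball 0 1" for x :: 'a using that by simp
    show "emeasure (distr lborel borel f) (ball 0 1) = emeasure lborel (ball (0::'a) 1)"
      by (simp add: emeasure_distr pre)
    show "emeasure lborel (ball (0::'a) 1) \<noteq> 0"
    proof -
      have u: "unit_ball_vol (real DIM('a)) > 0" by (rule unit_ball_vol_pos) simp
      show ?thesis apply (simp add: emeasure_ball) using u by linarith
    qed
    show "emeasure lborel (ball (0::'a) 1) \<noteq> \<infinity>"
      by (rule fb)
  qed
qed

lemma herm_proj_proj:
  "herm (proj_perp q a) (proj_perp q b) = herm a b - herm a q * herm q b / herm q q"
proof (cases "q = 0")
  case True then show ?thesis by (simp add: proj_perp_def)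
next
  case False
  then have n: "herm q q \<noteq> 0" by (simp add: herm_self_zero_iff)
  have r: "cnj (herm q q) = herm q q" by (simp add: herm_self)
  show ?thesis unfolding proj_perp_def herm_simps using n
    by (simp add: r herm_cnj[of q a] herm_cnj[of b q] field_simps power2_eq_square)
qed

definition Pq :: "complex^'n \<Rightarrow> complex^'n \<Rightarrow> complex^'n \<Rightarrow> complex" where
  "Pq q a b = herm a b - herm a q * herm q b / herm q q"

lemma Phi_explicit: "Phi z u v q = - Im (Pq q u v / complex_of_real (Re (Pq q z z))
   - Pq q u z * Pq q z v / complex_of_real ((Re (Pq q z z))^2))"
  unfolding Phi_def fs_form_def Pq_def herm_proj_proj ..

lemma cont_nth: "continuous_on UNIV (\<lambda>x::complex^'n. x $ i)"
  by (simp add: linear_continuous_on bounded_linear_vec_nth)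

lemma meas_nth[measurable]: "(\<lambda>x::complex^'n. x $ i) \<in> borel_measurable borel"
  by (rule borel_measurable_continuous_onI[OF cont_nth])

lemma cont_herm1: "continuous_on UNIV (\<lambda>q::complex^'n. herm q a)"
  unfolding herm_def by (intro continuous_intros cont_nth)
lemma cont_herm2: "continuous_on UNIV (\<lambda>q::complex^'n. herm a q)"
  unfolding herm_def by (intro continuous_intros continuous_on_cnj cont_nth)
lemma cont_herm3: "continuous_on UNIV (\<lambda>q::complex^'n. herm q q)"
  unfolding herm_def by (intro continuous_intros continuous_on_cnj cont_nth)

lemma meas_herm1[measurable]: "(\<lambda>q::complex^'n. herm q a) \<in> borel_measurable borel"
  by (rule borel_measurable_continuous_onI[OF cont_herm1])
lemma meas_herm2[measurable]: "(\<lambda>q::complex^'n. herm a q) \<in> borel_measurable borel"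
  by (rule borel_measurable_continuous_onI[OF cont_herm2])
lemma meas_herm3[measurable]: "(\<lambda>q::complex^'n. herm q q) \<in> borel_measurable borel"
  by (rule borel_measurable_continuous_onI[OF cont_herm3])

lemma meas_Pq[measurable]: "(\<lambda>q::complex^'n. Pq q a b) \<in> borel_measurable borel"
  unfolding Pq_def by measurable

lemma meas_Phi[measurable]: "(\<lambda>q::complex^'n. Phi z u v q) \<in> borel_measurable borel"
  unfolding Phi_explicit by measurable

lemma avoid_dom_explicit: "avoid_dom z = {q. herm q q \<noteq> 0 \<and> norm q \<le> 1 \<and> Pq q z z \<noteq> 0}"
  unfolding avoid_dom_def Pq_def herm_proj_proj[symmetric] herm_self_zero_iff ..

lemma avoid_dom_sets[measurable]: "avoid_dom z \<in> sets borel"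
  unfolding avoid_dom_explicit by measurable

lemma lborel_crefl: assumes "herm w w = 1"
  shows "distr lborel borel (crefl w) = lborel"
  using isU_crefl[OF assms] crefl_invol[OF assms]
  by (intro lborel_invol_isometry) (auto simp: isU_linear isU_norm)

definition goodU :: "(complex^'n \<Rightarrow> complex^'n) \<Rightarrow> bool" where
  "goodU U \<longleftrightarrow> isU U \<and> distr lborel borel U = lborel \<and> U \<in> borel_measurable borel"

lemma goodU_crefl: assumes "herm w w = 1" shows "goodU (crefl w)"
proof -
  have l: "linear (crefl w)" using isU_crefl[OF assms] by (rule isU_linear)
  then have "bounded_linear (crefl w)" by (simp add: linear_conv_bounded_linear)
  then have "crefl w \<in> borel_measurable borel"
    by (intro borel_measurable_continuous_onI linear_continuous_on)
  then show ?thesis unfolding goodU_def using isU_crefl[OF assms] lborel_crefl[OF assms] by simp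
qed

lemma goodU_id: "goodU (\<lambda>x. x)"
  by (simp add: goodU_def isU_def distr_id2)

lemma goodU_transfer:
  assumes U: "goodU U"
  shows "set_integrable lborel (avoid_dom (U z)) (Phi (U z) (U u) (U v))
           \<longleftrightarrow> set_integrable lborel (avoid_dom z) (Phi z u v)"
    and "(LINT q : avoid_dom (U z) | lborel. Phi (U z) (U u) (U v) q)
           = (LINT q : avoid_dom z | lborel. Phi z u v q)"
proof -
  have iU: "isU U" and d: "distr lborel borel U = lborel" and m[measurable]: "U \<in> borel_measurable borel"
    using U by (auto simp: goodU_def)
  let ?g = "\<lambda>q. indicator (avoid_dom (U z)) q *\<^sub>R Phi (U z) (U u) (U v) q"
  have gm: "?g \<in> borel_measurable borel" by measurable
  have gU: "?g (U q) = indicator (avoid_dom z) q *\<^sub>R Phi z u v q" for q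
    using isU_avoid[OF iU, of q z] isU_Phi[OF iU, of z u v q] by (simp add: indicator_def)
  have "integrable lborel ?g \<longleftrightarrow> integrable (distr lborel borel U) ?g" by (simp add: d)
  also have "\<dots> \<longleftrightarrow> integrable lborel (\<lambda>q. ?g (U q))"
    by (rule integrable_distr_eq) (auto simp: gm)
  finally show "set_integrable lborel (avoid_dom (U z)) (Phi (U z) (U u) (U v))
           \<longleftrightarrow> set_integrable lborel (avoid_dom z) (Phi z u v)"
    unfolding set_integrable_def gU .
  have "integral\<^sup>L lborel ?g = integral\<^sup>L (distr lborel borel U) ?g" by (simp add: d)
  also have "\<dots> = integral\<^sup>L lborel (\<lambda>q. ?g (U q))"
    by (rule integral_distr) (auto simp: gm)
  finally show "(LINT q : avoid_dom (U z) | lborel. Phi (U z) (U u) (U v) q)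
           = (LINT q : avoid_dom z | lborel. Phi z u v q)"
    unfolding set_lebesgue_integral_def gU .
qed

lemma move_unit:
  fixes a b :: "complex^'n"
  assumes a: "herm a a = 1" and b: "herm b b = 1"
  shows "\<exists>U l. goodU U \<and> cmod l = 1 \<and> U a = l *s b \<and> (\<forall>c. herm c a = 0 \<and> herm c b = 0 \<longrightarrow> U c = c)"
proof -
  define h where "h = herm a b"
  define l where "l = (if h = 0 then 1 else h / complex_of_real (cmod h))"
  have l1: "cmod l = 1" by (simp add: l_def norm_divide)
  have ll: "l * cnj l = 1"
    using l1 by (metis complex_norm_square mult.commute norm_one of_real_1 power_one)
  have r: "cnj l * h = complex_of_real (cmod h)"
  proof (cases "h = 0")
    case True then show ?thesis by (simp add: l_def)
  next
    case False
    then show ?thesis unfolding l_def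
      by (simp add: complex_norm_square[symmetric] power2_eq_square field_simps)
  qed
  have r': "l * cnj h = complex_of_real (cmod h)"
    using arg_cong[OF r, of cnj] by (simp add: mult.commute)
  define d where "d = a - l *s b"
  show ?thesis
  proof (cases "d = 0")
    case True
    then have "a = l *s b" by (simp add: d_def)
    then show ?thesis using goodU_id l1 by blast
  next
    case False
    have hba: "herm b a = cnj h" by (simp add: h_def herm_cnj[of b a])
    have hdd: "herm d d = 2 - 2 * complex_of_real (cmod h)"
      unfolding d_def herm_simps a b hba h_def[symmetric]
      using r r' ll by (simp add: algebra_simps mult.assoc[symmetric])
    have had: "herm a d = 1 - complex_of_real (cmod h)"
      unfolding d_def herm_simps a h_def[symmetric] using r by simp
    have nd: "herm d d \<noteq> 0" using False by (simp add: herm_self_zero_iff)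
    define w where "w = complex_of_real (1 / norm d) *s d"
    have ndr: "norm d \<noteq> 0" using False by simp
    have hdd2: "herm d d = complex_of_real ((norm d)^2)" by (rule herm_self)
    have w1: "herm w w = 1"
      unfolding w_def herm_simps hdd2 using ndr by (simp add: power2_eq_square)
    have U: "goodU (crefl w)" by (rule goodU_crefl[OF w1])
    have coef: "2 * herm a w * complex_of_real (1 / norm d) = 1"
    proof -
      have "2 * herm a w * complex_of_real (1 / norm d) = 2 * herm a d / herm d d"
        unfolding w_def herm_simps hdd2 using ndr by (simp add: power2_eq_square field_simps)
      also have "\<dots> = 1" unfolding had hdd using nd hdd by (simp add: field_simps)
      finally show ?thesis .
    qed
    have "crefl w a = a - d"
      unfolding crefl_def using coef by (simp add: w_def vec_eq_iff mult.assoc[symmetric])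
    then have Ua: "crefl w a = l *s b" by (simp add: d_def)
    have fx: "crefl w c = c" if "herm c a = 0" "herm c b = 0" for c
    proof -
      have "herm c w = 0" unfolding w_def d_def herm_simps using that by simp
      then show ?thesis by (simp add: crefl_def vec_eq_iff)
    qed
    show ?thesis using U l1 Ua fx by blast
  qed
qed

definition Qi :: "complex^'n \<Rightarrow> complex^'n \<Rightarrow> real" where
  "Qi z w = (LINT q : avoid_dom z | lborel. Phi z w (\<i> *s w) q)"
definition Ii :: "complex^'n \<Rightarrow> complex^'n \<Rightarrow> bool" where
  "Ii z w \<longleftrightarrow> set_integrable lborel (avoid_dom z) (Phi z w (\<i> *s w))"

lemma QI_U: assumes "goodU U" shows "Qi (U z) (U w) = Qi z w" "Ii (U z) (U w) \<longleftrightarrow> Ii z w"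
proof -
  have iU: "isU U" using assms by (simp add: goodU_def)
  have e: "U (\<i> *s w) = \<i> *s U w" by (rule isU_scale[OF iU])
  show "Qi (U z) (U w) = Qi z w" unfolding Qi_def e[symmetric] by (rule goodU_transfer(2)[OF assms])
  show "Ii (U z) (U w) \<longleftrightarrow> Ii z w" unfolding Ii_def e[symmetric] by (rule goodU_transfer(1)[OF assms])
qed

lemma smult_comm: "a *s (b *s (w::complex^'n)) = b *s (a *s w)"
  by (simp add: vec_eq_iff algebra_simps)

lemma Phi_phase: assumes "cmod l = 1" "cmod m = 1"
  shows "Phi (l *s z) (m *s w) (\<i> *s (m *s w)) q = Phi z w (\<i> *s w) q"
  unfolding smult_comm[of \<i> m] Phi_scale_z Phi_scale_uv using assms by simp

lemma QI_phase: assumes "cmod l = 1" "cmod m = 1"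
  shows "Qi (l *s z) (m *s w) = Qi z w" "Ii (l *s z) (m *s w) \<longleftrightarrow> Ii z w"
proof -
  have l0: "l \<noteq> 0" using assms by auto
  show "Qi (l *s z) (m *s w) = Qi z w"
    unfolding Qi_def avoid_scale[OF l0] Phi_phase[OF assms] ..
  show "Ii (l *s z) (m *s w) \<longleftrightarrow> Ii z w"
    unfolding Ii_def avoid_scale[OF l0] Phi_phase[OF assms] ..
qed

definition orthon :: "complex^'n \<Rightarrow> complex^'n \<Rightarrow> bool" where
  "orthon e f \<longleftrightarrow> herm e e = 1 \<and> herm f f = 1 \<and> herm f e = 0"

lemma Q_const:
  fixes e f e' f' :: "complex^'n"
  assumes o1: "orthon e f" and o2: "orthon e' f'"
  shows "Qi e f = Qi e' f' \<and> (Ii e f \<longleftrightarrow> Ii e' f')"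
proof -
  from o1 o2 have ee: "herm e e = 1" "herm e' e' = 1" "herm f f = 1" "herm f' f' = 1"
    "herm f e = 0" "herm f' e' = 0" by (auto simp: orthon_def)
  obtain U1 l where U1: "goodU U1" "cmod l = 1" "U1 e = l *s e'"
    using move_unit[OF ee(1,2)] by blast
  have iU1: "isU U1" using U1 by (simp add: goodU_def)
  define g where "g = U1 f"
  have gg: "herm g g = 1" unfolding g_def using isU_herm[OF iU1] ee by simp
  have "herm g (l *s e') = 0" unfolding g_def U1(3)[symmetric] using isU_herm[OF iU1] ee by simp
  then have ge: "herm g e' = 0" using U1(2) by (auto simp: herm_simps)
  then have eg: "herm e' g = 0" by (simp add: herm_cnj[of e' g])
  have eF: "herm e' f' = 0" using ee by (simp add: herm_cnj[of e' f'])
  obtain U2 m where U2: "goodU U2" "cmod m = 1" "U2 g = m *s f'"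
    and fx: "\<And>c. herm c g = 0 \<and> herm c f' = 0 \<longrightarrow> U2 c = c"
    using move_unit[OF gg ee(4)] by blast
  have U2e: "U2 e' = e'" using fx eg eF by blast
  have one: "cmod (1::complex) = 1" by simp
  have s1: "Qi e f = Qi e' g \<and> (Ii e f \<longleftrightarrow> Ii e' g)"
    using QI_U[OF U1(1), of e f] QI_phase[OF U1(2) one, of e' g] by (simp add: U1(3) g_def)
  have s2: "Qi e' g = Qi e' f' \<and> (Ii e' g \<longleftrightarrow> Ii e' f')"
    using QI_U[OF U2(1), of e' g] QI_phase[OF one U2(2), of e' f'] by (simp add: U2e U2(3))
  show ?thesis using s1 s2 by simp
qed

lemma Phi_zero_vecs: "Phi z 0 0 q = 0"
  by (simp add: Phi_def fs_form_def)

lemma Q_general: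
  fixes z w e0 f0 :: "complex^'n"
  assumes z: "z \<noteq> 0" and o: "orthon e0 f0" and I0: "Ii e0 f0"
  shows "Ii z w \<and> Qi z w = Qi e0 f0 * fs_form z w (\<i> *s w)"
proof -
  define al where "al = herm w z / herm z z"
  define w' where "w' = proj_perp z w"
  have wdec: "w = w' + al *s z" unfolding w'_def proj_perp_def al_def by simp
  have iwdec: "\<i> *s w = \<i> *s w' + (\<i> * al) *s z" unfolding wdec by (simp add: vec_eq_iff algebra_simps)
  have Pw: "Phi z w (\<i> *s w) q = Phi z w' (\<i> *s w') q" for q
    unfolding iwdec by (subst wdec) (rule Phi_shift)
  have fsw: "fs_form z w (\<i> *s w) = (norm w')^2 / (norm z)^2"
    unfolding fs_self_i w'_def ..
  show ?thesis
  proof (cases "w' = 0")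
    case True
    have P0: "Phi z w (\<i> *s w) q = 0" for q unfolding Pw True by (simp add: Phi_zero_vecs)
    show ?thesis unfolding Ii_def Qi_def P0 fsw True
      by (simp add: set_integrable_def set_lebesgue_integral_def)
  next
    case False
    define nz where "nz = norm z"
    define nw where "nw = norm w'"
    have nz0: "nz > 0" "nz \<noteq> 0" using z by (auto simp: nz_def)
    have nw0: "nw > 0" "nw \<noteq> 0" using False by (auto simp: nw_def)
    define e where "e = complex_of_real (1 / nz) *s z"
    define f where "f = complex_of_real (1 / nw) *s w'"
    have ze: "z = complex_of_real nz *s e" unfolding e_def using nz0 by (simp add: vec_eq_iff)
    have wf: "w' = complex_of_real nw *s f" unfolding f_def using nw0 by (simp add: vec_eq_iff)
    have hzz: "herm z z = complex_of_real (nz^2)" by (simp add: herm_self nz_def)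
    have hww: "herm w' w' = complex_of_real (nw^2)" by (simp add: herm_self nw_def)
    have hwz: "herm w' z = 0" unfolding w'_def using z by (rule herm_proj_q)
    have oef: "orthon e f" unfolding orthon_def e_def f_def herm_simps hzz hww hwz
      using nz0 nw0 by (simp add: power2_eq_square)
    have Pk: "Phi z w (\<i> *s w) q = (nw^2 / nz^2) * Phi e f (\<i> *s f) q" for q
    proof -
      have "Phi z w (\<i> *s w) q = Phi (complex_of_real nz *s e) (complex_of_real nw *s f) (complex_of_real nw *s (\<i> *s f)) q"
        unfolding Pw ze[symmetric] wf[symmetric] unfolding wf smult_comm[of \<i>] ..
      also have "\<dots> = (nw^2 / nz^2) * Phi e f (\<i> *s f) q"
        unfolding Phi_scale_z Phi_scale_uv using nz0 nw0 by simp
      finally show ?thesis .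
    qed
    have ad: "avoid_dom z = avoid_dom e" unfolding ze using nz0 by (simp add: avoid_scale)
    have Qc: "Qi e f = Qi e0 f0 \<and> (Ii e f \<longleftrightarrow> Ii e0 f0)" by (rule Q_const[OF oef o])
    have k0: "nw^2 / nz^2 \<noteq> 0" using nz0 nw0 by simp
    have "Ii z w \<longleftrightarrow> Ii e f" unfolding Ii_def Pk ad using k0 by simp
    moreover have "Qi z w = (nw^2 / nz^2) * Qi e f" unfolding Qi_def Pk ad by simp
    ultimately show ?thesis using Qc I0 fsw by (simp add: nz_def nw_def mult.commute)
  qed
qed

lemma final_from:
  fixes e0 f0 :: "complex^'n"
  assumes o: "orthon e0 f0" and I0: "Ii e0 f0" and pos: "Qi e0 f0 > 0"
  shows "\<exists>B::real. B > 0 \<and>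
    (\<forall>(z::complex^'n) u v. z \<noteq> 0 \<longrightarrow>
       set_integrable lborel (avoid_dom z)
         (\<lambda>q. fs_form (proj_perp q z) (proj_perp q u) (proj_perp q v)) \<and>
       fs_form z u v = B * (LINT q : avoid_dom z | lborel.
          fs_form (proj_perp q z) (proj_perp q u) (proj_perp q v)))"
proof (intro exI[of _ "1 / Qi e0 f0"] conjI allI impI)
  show "0 < 1 / Qi e0 f0" using pos by simp
  fix z u v :: "complex^'n" assume z: "z \<noteq> 0"
  define c where "c = Qi e0 f0"
  have c0: "c > 0" using pos by (simp add: c_def)
  have P: "(\<lambda>q. fs_form (proj_perp q z) (proj_perp q u) (proj_perp q v)) = Phi z u v"
    by (simp add: Phi_def fun_eq_iff)
  define a where "a = u - \<i> *s v"
  define b where "b = u + \<i> *s v"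
  have G1: "Ii z a \<and> Qi z a = c * fs_form z a (\<i> *s a)" unfolding c_def by (rule Q_general[OF z o I0])
  have G2: "Ii z b \<and> Qi z b = c * fs_form z b (\<i> *s b)" unfolding c_def by (rule Q_general[OF z o I0])
  have pol: "Phi z u v = (\<lambda>q. (Phi z a (\<i> *s a) q - Phi z b (\<i> *s b) q) / 4)"
    unfolding a_def b_def by (rule ext) (rule Phi_polar)
  have i1: "set_integrable lborel (avoid_dom z) (Phi z a (\<i> *s a))" using G1 by (simp add: Ii_def)
  have i2: "set_integrable lborel (avoid_dom z) (Phi z b (\<i> *s b))" using G2 by (simp add: Ii_def)
  have id: "set_integrable lborel (avoid_dom z) (\<lambda>q. Phi z a (\<i> *s a) q - Phi z b (\<i> *s b) q)"
    using i1 i2 by (rule set_integral_diff(1))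
  show "set_integrable lborel (avoid_dom z) (\<lambda>q. fs_form (proj_perp q z) (proj_perp q u) (proj_perp q v))"
    unfolding P pol using id by (rule set_integrable_divide)
  have "(LINT q : avoid_dom z | lborel. Phi z u v q) = (Qi z a - Qi z b) / 4"
    unfolding pol Qi_def using set_integral_diff(2)[OF i1 i2] by simp
  also have "\<dots> = c * fs_form z u v"
  proof -
    have q1: "Qi z a = c * fs_form z a (\<i> *s a)" using G1 by blast
    have q2: "Qi z b = c * fs_form z b (\<i> *s b)" using G2 by blast
    show ?thesis unfolding q1 q2 fs_polar[of z u v, folded a_def b_def] by (simp add: right_diff_distrib)
  qed
  finally show "fs_form z u v = 1 / Qi e0 f0 * (LINT q : avoid_dom z | lborel.
          fs_form (proj_perp q z) (proj_perp q u) (proj_perp q v))"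
    unfolding P using c0 by (simp add: c_def)
qed

lemma herm_axis_left: "herm (axis a 1) q = cnj (q $ a)"
proof -
  have "herm (axis a 1) q = (\<Sum>i\<in>UNIV. if i = a then cnj (q $ i) else 0)"
    unfolding herm_def by (rule sum.cong) (auto simp: axis_def)
  then show ?thesis by simp
qed

lemma herm_axis_right: "herm q (axis a 1) = q $ a"
proof -
  have "herm q (axis a 1) = (\<Sum>i\<in>UNIV. if i = a then q $ i else 0)"
    unfolding herm_def by (rule sum.cong) (auto simp: axis_def)
  then show ?thesis by simp
qed

lemma orthon_axis: "j \<noteq> a \<Longrightarrow> orthon (axis a 1) (axis j (1::complex))"
  unfolding orthon_def herm_axis_left by (simp add: axis_def)

lemma normsq_sum: "(norm (q::complex^'n))^2 = (\<Sum>i\<in>UNIV. (cmod (q $ i))^2)"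
  by (simp add: norm_vec_def L2_set_def sum_nonneg)

lemma psi_ge:
  fixes q :: "complex^'n"
  assumes "a \<noteq> j" "a \<noteq> k" "j \<noteq> k"
  shows "(cmod (q$j))^2 + (cmod (q$k))^2 \<le> (norm q)^2 - (cmod (q$a))^2"
proof -
  have "(norm q)^2 = (cmod (q$a))^2 + (\<Sum>i\<in>UNIV - {a}. (cmod (q $ i))^2)"
    unfolding normsq_sum by (simp add: sum.remove[of UNIV a])
  moreover have "(\<Sum>i\<in>{j,k}. (cmod (q $ i))^2) \<le> (\<Sum>i\<in>UNIV - {a}. (cmod (q $ i))^2)"
    by (rule sum_mono2) (use assms in auto)
  ultimately show ?thesis using assms by simp
qed

lemma box_bound:
  fixes j k :: "'n::finite" and r :: real
  assumes jk: "j \<noteq> k" and r: "0 \<le> r"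
  defines "F \<equiv> {axis j 1, axis j \<i>, axis k 1, axis k \<i>} :: (complex^'n) set"
  shows "emeasure lborel {q::complex^'n. norm q \<le> 1 \<and> cmod (q$j) \<le> r \<and> cmod (q$k) \<le> r}
         \<le> ennreal (2 ^ card (Basis - F) * (2 * r) ^ 4)"
proof -
  define g where "g b = (if b \<in> F then 2 * r else 2)" for b :: "complex^'n"
  define d where "d = (\<Sum>b\<in>Basis. (g b / 2) *\<^sub>R b)"
  have db: "d \<bullet> b = g b / 2" if "b \<in> Basis" for b using that by (simp add: d_def)
  have FB: "F \<subseteq> Basis" by (simp add: F_def Basis_complex_def)
  have cF: "card F = 4"
    unfolding F_def using jk by (simp add: axis_eq_axis complex_eq_iff)
  have sub: "{q::complex^'n. norm q \<le> 1 \<and> cmod (q$j) \<le> r \<and> cmod (q$k) \<le> r} \<subseteq> cbox (-d) d"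
  proof
    fix q :: "complex^'n" assume q: "q \<in> {q. norm q \<le> 1 \<and> cmod (q$j) \<le> r \<and> cmod (q$k) \<le> r}"
    have "\<bar>q \<bullet> b\<bar> \<le> g b / 2" if b: "b \<in> Basis" for b
    proof (cases "b \<in> F")
      case True
      then consider "b = axis j 1" | "b = axis j \<i>" | "b = axis k 1" | "b = axis k \<i>"
        unfolding F_def by blast
      then show ?thesis
        using q True abs_Re_le_cmod[of "q$j"] abs_Im_le_cmod[of "q$j"]
          abs_Re_le_cmod[of "q$k"] abs_Im_le_cmod[of "q$k"]
        by cases (auto simp: g_def inner_axis)
    next
      case False
      have "\<bar>q \<bullet> b\<bar> \<le> norm q * norm b" by (rule Cauchy_Schwarz_ineq2)
      also have "\<dots> \<le> 1" using q b by simp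
      finally show ?thesis using False by (simp add: g_def)
    qed
    then show "q \<in> cbox (-d) d" unfolding mem_box
    proof (intro ballI conjI)
      fix i :: "complex^'n" assume i: "i \<in> Basis"
      assume h: "\<And>b. b \<in> Basis \<Longrightarrow> \<bar>q \<bullet> b\<bar> \<le> g b / 2"
      from h[OF i] db[OF i] show "-d \<bullet> i \<le> q \<bullet> i" "q \<bullet> i \<le> d \<bullet> i"
        by (auto simp: inner_minus_left abs_le_iff)
    qed
  qed
  have gpos: "0 \<le> g b" for b using r by (simp add: g_def)
  have "emeasure lborel (cbox (-d) d) = ennreal (\<Prod>b\<in>Basis. (d - (-d)) \<bullet> b)"
  proof -
    have "\<forall>b\<in>Basis. (-d) \<bullet> b \<le> d \<bullet> b"
    proof
      fix b :: "complex^'n" assume "b \<in> Basis"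
      then have "d \<bullet> b = g b / 2" by (rule db)
      then show "(-d) \<bullet> b \<le> d \<bullet> b" using gpos[of b] by (simp add: inner_minus_left)
    qed
    then show ?thesis by (simp add: emeasure_lborel_cbox_eq)
  qed
  also have "(\<Prod>b\<in>Basis. (d - (-d)) \<bullet> b) = (\<Prod>b\<in>Basis. g b)"
  proof (rule prod.cong)
    fix b :: "complex^'n" assume b: "b \<in> Basis"
    have "(d - (-d)) \<bullet> b = d \<bullet> b - (-d) \<bullet> b" by (rule inner_diff_left)
    also have "\<dots> = g b" unfolding inner_minus_left db[OF b] by simp
    finally show "(d - (-d)) \<bullet> b = g b" .
  qed simp
  also have "\<dots> = (\<Prod>b\<in>Basis - F. g b) * (\<Prod>b\<in>F. g b)"
    using FB by (simp add: prod.subset_diff)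
  also have "\<dots> = 2 ^ card (Basis - F) * (2 * r) ^ 4"
    by (simp add: g_def cF)
  finally have "emeasure lborel (cbox (-d) d) = ennreal (2 ^ card (Basis - F) * (2 * r) ^ 4)" .
  moreover have "emeasure lborel {q::complex^'n. norm q \<le> 1 \<and> cmod (q$j) \<le> r \<and> cmod (q$k) \<le> r}
      \<le> emeasure lborel (cbox (-d) d)"
    by (rule emeasure_mono[OF sub]) simp
  ultimately show ?thesis by simp
qed

lemma level_choice:
  fixes p :: real assumes p: "0 < p" "p \<le> 1"
  shows "\<exists>n::nat. p \<le> (1/4)^n \<and> 1/p \<le> 4 * 4^n"
proof -
  obtain N where N: "1/p < 4^N" using real_arch_pow[of 4 "1/p"] by auto
  define N0 where "N0 = (LEAST N. 1/p < (4::real)^N)"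
  have N0: "1/p < 4^N0" unfolding N0_def by (rule LeastI[of _ N]) (rule N)
  have "1 \<le> 1/p" using p by simp
  then have N00: "N0 \<noteq> 0"
  proof -
    assume h: "1 \<le> 1/p"
    show "N0 \<noteq> 0"
    proof
      assume "N0 = 0" with N0 have "1/p < 1" by simp
      with h show False by simp
    qed
  qed
  define n where "n = N0 - 1"
  have Nn: "N0 = Suc n" using N00 by (simp add: n_def)
  have "\<not> 1/p < 4^n" unfolding n_def N0_def
    by (rule not_less_Least) (use N00 in \<open>simp add: N0_def\<close>)
  then have "4^n \<le> 1/p" by simp
  then have "p \<le> 1 / 4^n" using p by (simp add: field_simps)
  moreover have "1/p \<le> 4 * 4^n" using N0 Nn by simp
  ultimately show ?thesis by (auto simp: power_one_over)
qed

lemma level_measure: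
  fixes j k :: "'n::finite"
  assumes jk: "j \<noteq> k"
  defines "F \<equiv> {axis j 1, axis j \<i>, axis k 1, axis k \<i>} :: (complex^'n) set"
  shows "emeasure lborel {q::complex^'n. norm q \<le> 1 \<and> (cmod (q$j))^2 + (cmod (q$k))^2 \<le> (1/4)^n}
         \<le> ennreal (2 ^ card (Basis - F) * 16 * (1/16)^n)"
proof -
  let ?r = "(1/2::real)^n"
  have sub: "{q::complex^'n. norm q \<le> 1 \<and> (cmod (q$j))^2 + (cmod (q$k))^2 \<le> (1/4)^n}
      \<subseteq> {q::complex^'n. norm q \<le> 1 \<and> cmod (q$j) \<le> ?r \<and> cmod (q$k) \<le> ?r}"
  proof safe
    fix q :: "complex^'n"
    assume h: "(cmod (q$j))^2 + (cmod (q$k))^2 \<le> (1/4)^n"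
    have r2: "(1/4::real)^n = ?r^2" unfolding power2_eq_square power_mult_distrib[symmetric] by simp
    have "(cmod (q$j))^2 \<le> ?r^2" using h r2 by (smt (verit) zero_le_power2)
    then show "cmod (q$j) \<le> ?r" by (rule power2_le_imp_le) simp
    have "(cmod (q$k))^2 \<le> ?r^2" using h r2 by (smt (verit) zero_le_power2)
    then show "cmod (q$k) \<le> ?r" by (rule power2_le_imp_le) simp
  qed
  have "emeasure lborel {q::complex^'n. norm q \<le> 1 \<and> (cmod (q$j))^2 + (cmod (q$k))^2 \<le> (1/4)^n}
     \<le> emeasure lborel {q::complex^'n. norm q \<le> 1 \<and> cmod (q$j) \<le> ?r \<and> cmod (q$k) \<le> ?r}"
    by (rule emeasure_mono[OF sub]) measurable
  also have "\<dots> \<le> ennreal (2 ^ card (Basis - F) * (2 * ?r) ^ 4)"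
    unfolding F_def by (rule box_bound[OF jk]) simp
  also have "(2 * ?r) ^ 4 = 16 * (1/16::real)^n"
  proof -
    have e: "((2::real)^n)^4 = (2^4)^n" by (metis power_mult mult.commute)
    show ?thesis by (simp add: power_divide e power_one_over)
  qed
  finally show ?thesis by (simp add: mult.assoc)
qed

lemma Phi_std_bound:
  fixes a j :: "'n::finite" and q :: "complex^'n"
  assumes aj: "a \<noteq> j" and q: "q \<in> avoid_dom (axis a 1)"
  shows "0 < (norm q)^2 - (cmod (q$a))^2" "(norm q)^2 - (cmod (q$a))^2 \<le> 1"
    and "Phi (axis a 1) (axis j 1) (\<i> *s axis j 1) q \<le> 1 / ((norm q)^2 - (cmod (q$a))^2)"
proof -
  let ?e = "axis a 1 :: complex^'n" and ?f = "axis j 1 :: complex^'n"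
  have q0: "q \<noteq> 0" and q1: "norm q \<le> 1" and T0: "proj_perp q ?e \<noteq> 0"
    using q by (auto simp: avoid_dom_def)
  have nq: "norm q > 0" using q0 by simp
  have ne: "norm ?e = 1" using orthon_axis[OF aj[symmetric]] herm_self[of ?e]
    by (simp add: orthon_def)
  have nf: "norm ?f = 1" using orthon_axis[OF aj] herm_self[of ?f]
    by (simp add: orthon_def)
  define psi where "psi = (norm q)^2 - (cmod (q$a))^2"
  have T: "(norm (proj_perp q ?e))^2 = psi / (norm q)^2"
    unfolding norm_proj_sq[OF q0] herm_axis_left ne psi_def using nq by (simp add: field_simps)
  have Tp: "(norm (proj_perp q ?e))^2 > 0" using T0 by simp
  then show pp: "0 < (norm q)^2 - (cmod (q$a))^2" unfolding T psi_def[symmetric] using nq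
    by (simp add: zero_less_divide_iff)
  have "(norm q)^2 \<le> 1" using q1 by (simp add: power_le_one)
  then show "(norm q)^2 - (cmod (q$a))^2 \<le> 1" by (smt (verit) zero_le_power2)
  have "Phi ?e ?f (\<i> *s ?f) q \<le> (norm ?f)^2 / (norm (proj_perp q ?e))^2" by (rule Phi_self_i_le)
  also have "\<dots> = (norm q)^2 / psi" unfolding nf T using nq by simp
  also have "\<dots> \<le> 1 / psi" using \<open>(norm q)^2 \<le> 1\<close> pp unfolding psi_def[symmetric] by (intro divide_right_mono) auto
  finally show "Phi ?e ?f (\<i> *s ?f) q \<le> 1 / ((norm q)^2 - (cmod (q$a))^2)" by (simp add: psi_def)
qed

lemma Ii_std:
  fixes a j k :: "'n::finite"
  assumes aj: "a \<noteq> j" and ak: "a \<noteq> k" and jk: "j \<noteq> k"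
  shows "Ii (axis a 1 :: complex^'n) (axis j 1)"
proof -
  let ?e = "axis a 1 :: complex^'n" and ?f = "axis j 1 :: complex^'n"
  define P where "P = Phi ?e ?f (\<i> *s ?f)"
  define D where "D = avoid_dom ?e"
  define L where "L n = {q::complex^'n. norm q \<le> 1 \<and> (cmod (q$j))^2 + (cmod (q$k))^2 \<le> (1/4)^n}" for n :: nat
  define F where "F = ({axis j 1, axis j \<i>, axis k 1, axis k \<i>} :: (complex^'n) set)"
  define K :: real where "K = 2 ^ card (Basis - F)"
  have K0: "K \<ge> 0" by (simp add: K_def)
  have Lm[measurable]: "L n \<in> sets borel" for n unfolding L_def by measurable
  have Pm[measurable]: "P \<in> borel_measurable borel" unfolding P_def by measurable
  have Dm[measurable]: "D \<in> sets borel" unfolding D_def by measurable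
  define S where "S q = (\<Sum>n. ennreal (4 * 4^n) * indicator (L n) q)" for q
  have pw: "ennreal (norm (indicator D q *\<^sub>R P q)) \<le> S q" for q
  proof (cases "q \<in> D")
    case False then show ?thesis by simp
  next
    case True
    have qd: "q \<in> avoid_dom ?e" using True by (simp add: D_def)
    note bnd = Phi_std_bound[OF aj qd]
    define psi where "psi = (norm q)^2 - (cmod (q$a))^2"
    obtain n where n: "psi \<le> (1/4)^n" "1/psi \<le> 4 * 4^n"
      using level_choice[of psi] bnd(1,2) by (auto simp: psi_def)
    have q1: "norm q \<le> 1" using qd by (simp add: avoid_dom_def)
    have "(cmod (q$j))^2 + (cmod (q$k))^2 \<le> psi" unfolding psi_def by (rule psi_ge[OF aj ak jk])
    then have qL: "q \<in> L n" using n q1 by (simp add: L_def)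
    have P0: "0 \<le> P q" unfolding P_def by (rule Phi_self_i_nonneg)
    have "norm (indicator D q *\<^sub>R P q) = P q" using True P0 by simp
    also have "\<dots> \<le> 4 * 4^n" using bnd(3) n(2) by (simp add: P_def psi_def)
    finally have "ennreal (norm (indicator D q *\<^sub>R P q)) \<le> ennreal (4 * 4^n) * indicator (L n) q"
      using qL by simp
    also have "\<dots> \<le> S q"
    proof -
      have "(\<Sum>i\<in>{n}. ennreal (4 * 4^i) * indicator (L i) q) \<le> S q" unfolding S_def
        by (rule sum_le_suminf[OF summableI]) auto
      moreover have "(\<Sum>i\<in>{n}. ennreal (4 * 4^i) * indicator (L i) q) = ennreal (4 * 4^n) * indicator (L n) q"
        by (simp only: sum.insert_remove[OF finite.emptyI] empty_Diff sum.empty add_0_right)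
      ultimately show ?thesis by simp
    qed
    finally show ?thesis .
  qed
  have "(\<integral>\<^sup>+q. S q \<partial>lborel) = (\<Sum>n. \<integral>\<^sup>+q. ennreal (4 * 4^n) * indicator (L n) q \<partial>lborel)"
    unfolding S_def by (rule nn_integral_suminf) measurable
  also have "\<dots> = (\<Sum>n. ennreal (4 * 4^n) * emeasure lborel (L n))"
    by (simp add: nn_integral_cmult_indicator)
  also have "\<dots> \<le> (\<Sum>n. ennreal (64 * K * (1/4)^n))"
  proof (rule suminf_le[OF _ summableI summableI])
    fix n
    have "emeasure lborel (L n) \<le> ennreal (K * 16 * (1/16)^n)"
      unfolding L_def K_def F_def by (rule level_measure[OF jk])
    then have "ennreal (4 * 4^n) * emeasure lborel (L n) \<le> ennreal (4 * 4^n) * ennreal (K * 16 * (1/16)^n)"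
      by (rule mult_left_mono) simp
    also have "\<dots> = ennreal (4 * 4^n * (K * 16 * (1/16)^n))"
      by (rule ennreal_mult[symmetric]) (use K0 in simp_all)
    also have "4 * 4^n * (K * 16 * (1/16)^n) = 64 * K * (1/4::real)^n"
    proof -
      have "(4::real)^n * (1/16)^n = (1/4)^n" by (simp add: power_mult_distrib[symmetric])
      moreover have "4 * 4^n * (K * 16 * (1/16)^n) = 64 * K * ((4::real)^n * (1/16)^n)" by simp
      ultimately show ?thesis by simp
    qed
    finally show "ennreal (4 * 4^n) * emeasure lborel (L n) \<le> ennreal (64 * K * (1/4)^n)" .
  qed
  also have "\<dots> = ennreal (\<Sum>n. 64 * K * (1/4)^n)"
    by (rule suminf_ennreal2) (use K0 in \<open>auto intro!: summable_mult summable_geometric\<close>)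
  also have "\<dots> < \<infinity>" by simp
  finally have fin: "(\<integral>\<^sup>+q. S q \<partial>lborel) < \<infinity>" .
  have "(\<integral>\<^sup>+q. ennreal (norm (indicator D q *\<^sub>R P q)) \<partial>lborel) \<le> (\<integral>\<^sup>+q. S q \<partial>lborel)"
    by (rule nn_integral_mono) (rule pw)
  then have "(\<integral>\<^sup>+q. ennreal (norm (indicator D q *\<^sub>R P q)) \<partial>lborel) < \<infinity>" using fin by simp
  then have "integrable lborel (\<lambda>q. indicator D q *\<^sub>R P q)"
    by (intro integrableI_bounded) measurable
  then show ?thesis unfolding Ii_def set_integrable_def P_def D_def .
qed

lemma cont_at_herm1: "continuous (at q) (\<lambda>q::complex^'n. herm q a)"
  using cont_herm1 continuous_on_eq_continuous_at open_UNIV by blast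
lemma cont_at_herm2: "continuous (at q) (\<lambda>q::complex^'n. herm a q)"
  using cont_herm2 continuous_on_eq_continuous_at open_UNIV by blast
lemma cont_at_herm3: "continuous (at q) (\<lambda>q::complex^'n. herm q q)"
  using cont_herm3 continuous_on_eq_continuous_at open_UNIV by blast

lemma cont_at_Pq: "herm q0 q0 \<noteq> 0 \<Longrightarrow> continuous (at q0) (\<lambda>q::complex^'n. Pq q a b)"
  unfolding Pq_def by (intro continuous_intros cont_at_herm1 cont_at_herm2 cont_at_herm3)

lemma cont_at_Phi:
  assumes "herm q0 q0 \<noteq> 0" "Re (Pq q0 z z) \<noteq> 0"
  shows "continuous (at q0) (\<lambda>q::complex^'n. Phi z u v q)"
proof -
  have c: "continuous (at q0) (\<lambda>q::complex^'n. Pq q a b)" for a b by (rule cont_at_Pq[OF assms(1)])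
  have r0: "continuous (at q0) (\<lambda>q::complex^'n. Re (Pq q z z))"
    by (rule continuous_Re[OF c])
  have r: "continuous (at q0) (\<lambda>q::complex^'n. complex_of_real (Re (Pq q z z)))"
    by (intro continuous_intros r0)
  have r2: "continuous (at q0) (\<lambda>q::complex^'n. complex_of_real ((Re (Pq q z z))^2))"
    by (intro continuous_intros r0)
  have "continuous (at q0) (\<lambda>q::complex^'n. Pq q u v / complex_of_real (Re (Pq q z z))
   - Pq q u z * Pq q z v / complex_of_real ((Re (Pq q z z))^2))"
    by (intro continuous_intros c r r2) (simp_all add: assms)
  then show ?thesis unfolding Phi_explicit by (rule continuous_minus[OF continuous_Im])
qed

lemma Qi_std_pos:
  fixes a j k :: "'n::finite"
  assumes aj: "a \<noteq> j" and ak: "a \<noteq> k" and jk: "j \<noteq> k"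
  shows "Qi (axis a 1 :: complex^'n) (axis j 1) > 0"
proof -
  let ?e = "axis a 1 :: complex^'n" and ?f = "axis j 1 :: complex^'n"
  define P where "P = Phi ?e ?f (\<i> *s ?f)"
  define D where "D = avoid_dom ?e"
  define q0 where "q0 = (1/2::complex) *s (axis k 1 :: complex^'n)"
  have oef: "orthon ?e ?f" by (rule orthon_axis[OF aj[symmetric]])
  have hkk: "herm (axis k 1) (axis k 1 :: complex^'n) = 1" unfolding herm_axis_left by (simp add: axis_def)
  have hq0: "herm q0 q0 = 1/4" unfolding q0_def herm_simps hkk by simp
  have nq0: "norm q0 = 1/2"
  proof -
    have "complex_of_real ((norm q0)^2) = complex_of_real ((1/2)^2)"
      unfolding herm_self[symmetric] hq0 by (simp add: power2_eq_square)
    then have "(norm q0)^2 = (1/2)^2" using of_real_eq_iff by blast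
    then show ?thesis by (simp add: power2_eq_iff_nonneg)
  qed
  have eq0: "herm ?e q0 = 0" unfolding q0_def herm_simps herm_axis_left using ak by (simp add: axis_def)
  have fq0: "herm ?f q0 = 0" unfolding q0_def herm_simps herm_axis_left using jk by (simp add: axis_def)
  have pe: "proj_perp q0 ?e = ?e" unfolding proj_perp_def eq0 by simp
  have pf: "proj_perp q0 ?f = ?f" unfolding proj_perp_def fq0 by simp
  have hfe: "herm ?f ?e = 0" and hee: "herm ?e ?e = 1" and hff: "herm ?f ?f = 1"
    using oef by (auto simp: orthon_def)
  have ne: "norm ?e = 1" using hee herm_self[of ?e] by simp
  have nf: "norm ?f = 1" using hff herm_self[of ?f] by simp
  have pef: "proj_perp ?e ?f = ?f" unfolding proj_perp_def hfe by simp
  have P0: "P q0 = 1"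
    unfolding P_def Phi_def proj_scale pe pf fs_self_i pef ne nf by simp
  have Pqe: "Re (Pq q0 ?e ?e) \<noteq> 0"
    unfolding Pq_def eq0 hee by simp
  have hq00: "herm q0 q0 \<noteq> 0" unfolding hq0 by simp
  have cont: "continuous (at q0) P" unfolding P_def by (rule cont_at_Phi[OF hq00 Pqe])
  obtain d where d: "d > 0" "\<And>x. dist x q0 < d \<Longrightarrow> dist (P x) (P q0) < 1/2"
    using cont unfolding continuous_at_eps_delta by (metis half_gt_zero zero_less_one)
  define r where "r = min d (1/4)"
  have r0: "r > 0" using d by (simp add: r_def)
  define B where "B = ball q0 r"
  have PB: "P q > 1/2" if "q \<in> B" for q
  proof -
    have "dist q q0 < d" using that by (simp add: B_def r_def dist_commute)
    then have "\<bar>P q - 1\<bar> < 1/2" using d(2)[of q] P0 by (simp add: dist_real_def)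
    then show ?thesis by linarith
  qed
  have BD: "B \<subseteq> D"
  proof
    fix q assume qB: "q \<in> B"
    have dq: "norm (q - q0) < 1/4" using qB by (simp add: B_def r_def dist_norm norm_minus_commute)
    have "norm q \<le> norm q0 + norm (q - q0)" by (metis add_diff_cancel_left' norm_triangle_ineq diff_add_cancel)
    then have n1: "norm q \<le> 1" using dq nq0 by simp
    have "norm q0 \<le> norm q + norm (q - q0)" by (metis norm_triangle_sub norm_minus_commute)
    then have "q \<noteq> 0" using dq nq0 by auto
    moreover have "proj_perp q ?e \<noteq> 0"
    proof
      assume "proj_perp q ?e = 0"
      then have "P q = 0" by (simp add: P_def Phi_def fs_form_def)
      with PB[OF qB] show False by simp
    qed
    ultimately show "q \<in> D" using n1 by (simp add: D_def avoid_dom_def)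
  qed
  have Pm[measurable]: "P \<in> borel_measurable borel" unfolding P_def by measurable
  have Dm[measurable]: "D \<in> sets borel" unfolding D_def by measurable
  have Bm[measurable]: "B \<in> sets borel" unfolding B_def by simp
  have Bfin: "emeasure lborel B < \<infinity>" unfolding B_def by (rule emeasure_lborel_ball_finite)
  have intg: "integrable lborel (\<lambda>q. indicator D q *\<^sub>R P q)"
    using Ii_std[OF aj ak jk] unfolding Ii_def set_integrable_def P_def D_def .
  have intf: "integrable lborel (\<lambda>q. (1/2::real) * indicator B q)"
    using Bfin by (intro integrable_mult_right integrable_real_indicator) auto
  have le: "(1/2::real) * indicator B q \<le> indicator D q *\<^sub>R P q" for q
  proof (cases "q \<in> B")
    case True then show ?thesis using BD PB[OF True] by auto
  next
    case False
    have "0 \<le> P q" unfolding P_def by (rule Phi_self_i_nonneg)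
    then show ?thesis using False by (simp add: indicator_def)
  qed
  have "(\<integral>q. (1/2::real) * indicator B q \<partial>lborel) \<le> (\<integral>q. indicator D q *\<^sub>R P q \<partial>lborel)"
    by (rule integral_mono[OF intf intg le])
  moreover have "(\<integral>q. (1/2::real) * indicator B q \<partial>lborel) = (1/2) * measure lborel B"
    by simp
  moreover have "measure lborel B > 0"
  proof -
    have "emeasure lborel B = ennreal (unit_ball_vol (real DIM(complex^'n)) * r ^ DIM(complex^'n))"
      unfolding B_def by (rule emeasure_ball) (use r0 in simp)
    moreover have "unit_ball_vol (real DIM(complex^'n)) > 0" by (rule unit_ball_vol_pos) simp
    ultimately show ?thesis using r0 less_imp_le[OF r0] by (simp add: measure_def)
  qed
  ultimately show ?thesis unfolding Qi_def set_lebesgue_integral_def P_def[symmetric] D_def[symmetric]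
    by linarith
qed

lemma three_distinct:
  assumes "CARD('m::finite) \<ge> 3"
  shows "\<exists>a j k :: 'm. a \<noteq> j \<and> a \<noteq> k \<and> j \<noteq> k"
proof -
  obtain a :: 'm where True by simp
  have "card (UNIV - {a}) \<ge> 2" using assms by (simp add: card_Diff_singleton)
  then have "UNIV - {a} \<noteq> {}" by (metis card.empty not_numeral_le_zero)
  then obtain j where j: "j \<noteq> a" by auto
  have "card (UNIV - {a} - {j}) \<ge> 1" using assms j by (simp add: card_Diff_singleton)
  then have "UNIV - {a} - {j} \<noteq> {}" by (metis card.empty not_one_le_zero)
  then obtain k where k: "k \<noteq> a" "k \<noteq> j" by auto
  show ?thesis using j k by blast
qed

theorem lemmaA2:
  assumes "CARD('m::finite) \<ge> 3"
  shows "\<exists>B::real. B > 0 \<and>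
    (\<forall>(z::complex^'m) u v. z \<noteq> 0 \<longrightarrow>
       set_integrable lborel (avoid_dom z)
         (\<lambda>q. fs_form (proj_perp q z) (proj_perp q u) (proj_perp q v)) \<and>
       fs_form z u v = B * (LINT q : avoid_dom z | lborel.
          fs_form (proj_perp q z) (proj_perp q u) (proj_perp q v)))"
proof -
  obtain a j k :: 'm where d: "a \<noteq> j" "a \<noteq> k" "j \<noteq> k" using three_distinct[OF assms] by blast
  show ?thesis
    by (rule final_from[OF orthon_axis[OF d(1)[symmetric]] Ii_std[OF d] Qi_std_pos[OF d]])
qed

end
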